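(* For all positive integers $k$ and $n$, with $\ell:=\lfloor (k+1)^2/4\rfloor$ and $q:=n\bmod \ell$, \[ \nu_k(K_{k+1,n}) \le q\binom{\frac{n-q}{\ell}+1}{2} + (\ell-q)\binom{\frac{n-q}{\ell}}{2}. \]
   Context: A book with $k$ pages consists of a line (the spine) and $k$ half-planes (the pages) whose common boundary is the spine. A $k$-page drawing of a graph places all vertices on the spine and draws each edge inside a single page (edges may cross). $\nu_k(G)$ is the minimum number of crossings over all $k$-page drawings of $G$. Convention: $\binom{a}{b}=0$ whenever $a<b$. *)

theory Defs
  imports Main
begin

text \<open>The vertices are placed on the
spine in the order given by an injective position map; each edge is put in one of
the pages 0..k-1. Two edges on the same page cross iff their endpoints strictly
interleave along the spine (edges drawn as semicircles, which is optimal).\<close>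

definition crosses :: "('v \<Rightarrow> nat) \<Rightarrow> 'v set \<Rightarrow> 'v set \<Rightarrow> bool" where
  "crosses pos e f \<longleftrightarrow> (\<exists>a b c d. e = {a, b} \<and> f = {c, d} \<and>
      pos a < pos c \<and> pos c < pos b \<and> pos b < pos d)"

definition book_drawing :: "nat \<Rightarrow> 'v set \<Rightarrow> 'v set set \<Rightarrow> ('v \<Rightarrow> nat) \<Rightarrow> ('v set \<Rightarrow> nat) \<Rightarrow> bool" where
  "book_drawing k V E pos page \<longleftrightarrow> inj_on pos V \<and> (\<forall>e\<in>E. page e < k)"

text \<open>Each crossing pair is counted exactly once (the edge whose left endpoint is
further left comes first).\<close>
definition crossings :: "'v set set \<Rightarrow> ('v \<Rightarrow> nat) \<Rightarrow> ('v set \<Rightarrow> nat) \<Rightarrow> nat" where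
  "crossings E pos page = card {(e, f). e \<in> E \<and> f \<in> E \<and> page e = page f \<and> crosses pos e f}"

definition book_crossing_number :: "nat \<Rightarrow> 'v set \<Rightarrow> 'v set set \<Rightarrow> nat" where
  "book_crossing_number k V E =
     Inf {c. \<exists>pos page. book_drawing k V E pos page \<and> c = crossings E pos page}"

definition Kbip_V :: "nat \<Rightarrow> nat \<Rightarrow> (nat + nat) set" where
  "Kbip_V m n = Inl ` {..<m} \<union> Inr ` {..<n}"

definition Kbip_E :: "nat \<Rightarrow> nat \<Rightarrow> (nat + nat) set set" where
  "Kbip_E m n = {{Inl i, Inr j} | i j. i < m \<and> j < n}"

end

theory Submission
  imports Defs
begin

definition hh :: "nat \<Rightarrow> nat \<Rightarrow> nat" where "hh d a = (if a \<le> d then a else a - 1)"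
definition pg :: "nat \<Rightarrow> nat \<Rightarrow> nat \<Rightarrow> nat \<Rightarrow> nat" where
  "pg k d g a = (if hh d a + g - 1 < k then hh d a + g - 1 else hh d a + g - 1 - k)"

lemma pg_eq:
  assumes "1 \<le> g" "1 \<le> g'" "pg k d g a = pg k d' g' b"
  shows "hh d a + g = hh d' b + g' \<or> hh d a + g + k = hh d' b + g' \<or> hh d a + g = hh d' b + g' + k"
  using assms unfolding pg_def by (auto split: if_splits)

lemma hh_cases: "(a \<le> d \<and> hh d a = a) \<or> (d < a \<and> hh d a + 1 = a)"
  unfolding hh_def by auto

lemma core1:
  fixes k s a b d d' g g' j j' x y :: nat
  assumes "d < s" "d' < s" "s+1 \<le> g" "g \<le> k+1" "s+1 \<le> g'" "g' \<le> k+1" "a \<le> k" "b \<le> k"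
  and hx: "(a \<le> d \<and> x = a) \<or> (d < a \<and> x + 1 = a)"
  and hy: "(b \<le> d' \<and> y = b) \<or> (d' < b \<and> y + 1 = b)"
  and page: "x + g = y + g' \<or> x + g + k = y + g' \<or> x + g = y + g' + k"
  and "a < b" "b < g" "g < g' \<or> (g = g' \<and> (d < d' \<or> (d = d' \<and> j < j')))"
  shows "g = g' \<and> d = d' \<and> j < j' \<and> a = d \<and> b = d + 1"
  using assms(9-) by (elim disjE conjE; use assms(1-8) in linarith)

lemma core2:
  fixes k s a b d d' g g' j j' x y :: nat
  assumes "d < s" "d' < s" "s+1 \<le> g" "g \<le> k+1" "s+1 \<le> g'" "g' \<le> k+1" "a \<le> k" "b \<le> k"
  and hx: "(a \<le> d \<and> x = a) \<or> (d < a \<and> x + 1 = a)"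
  and hy: "(b \<le> d' \<and> y = b) \<or> (d' < b \<and> y + 1 = b)"
  and page: "x + g = y + g' \<or> x + g + k = y + g' \<or> x + g = y + g' + k"
  and "a < g'" "g' < g \<or> (g' = g \<and> (d' < d \<or> (d' = d \<and> j' < j)))" "g \<le> b"
  shows False
  using assms(9-) by (elim disjE conjE; use assms(1-8) in linarith)

lemma core3:
  fixes k s a b d d' g g' j j' x y :: nat
  assumes "d < s" "d' < s" "s+1 \<le> g" "g \<le> k+1" "s+1 \<le> g'" "g' \<le> k+1" "a \<le> k" "b \<le> k"
  and hx: "(a \<le> d \<and> x = a) \<or> (d < a \<and> x + 1 = a)"
  and hy: "(b \<le> d' \<and> y = b) \<or> (d' < b \<and> y + 1 = b)"
  and page: "x + g = y + g' \<or> x + g + k = y + g' \<or> x + g = y + g' + k"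
  and "g \<le> b" "b < a" "a < g'"
  shows False
  using assms(9-) by (elim disjE conjE; use assms(1-8) in linarith)

lemma core4:
  fixes k s a b d d' g g' j j' x y :: nat
  assumes "d < s" "d' < s" "s+1 \<le> g" "g \<le> k+1" "s+1 \<le> g'" "g' \<le> k+1" "a \<le> k" "b \<le> k"
  and hx: "(a \<le> d \<and> x = a) \<or> (d < a \<and> x + 1 = a)"
  and hy: "(b \<le> d' \<and> y = b) \<or> (d' < b \<and> y + 1 = b)"
  and page: "x + g = y + g' \<or> x + g + k = y + g' \<or> x + g = y + g' + k"
  and "g < g' \<or> (g = g' \<and> (d < d' \<or> (d = d' \<and> j < j')))" "g' \<le> a" "a < b"
  shows False
  using assms(9-) by (elim disjE conjE; use assms(1-8) in linarith)

lemma lex_lt: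
  fixes x y r r' W :: nat
  assumes "r < W" "r' < W"
  shows "x * W + r < y * W + r' \<longleftrightarrow> x < y \<or> (x = y \<and> r < r')"
proof -
  have A: "x * W + r < y * W + r'" if "x < y" "r < W" for x y r r' :: nat
  proof -
    have "Suc x * W \<le> y * W" using that by (intro mult_le_mono1) simp
    moreover have "x * W + r < Suc x * W" using that by simp
    ultimately show ?thesis by linarith
  qed
  have B: "y * W + r' < x * W + r" if "y < x" using A[OF that assms(2)] .
  show ?thesis
    using A[of x y r r'] B assms by (cases x y rule: linorder_cases) auto
qed

lemma lex_eq:
  fixes x y r r' W :: nat
  assumes "r < W" "r' < W"
  shows "x * W + r = y * W + r' \<longleftrightarrow> x = y \<and> r = r'"
  using lex_lt[OF assms, of x y] lex_lt[OF assms(2,1), of y x]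
  by (metis less_irrefl nat_neq_iff)

lemma L_eq:
  fixes k :: nat
  shows "(k + 1)^2 div 4 = ((k+1) div 2) * (k + 1 - (k+1) div 2)"
proof (cases "even (k+1)")
  case True
  then obtain m where m: "k + 1 = 2 * m" by blast
  have "(k+1)^2 = (2*m)^2" using m by simp
  also have "\<dots> = 4 * (m * m)" by (simp add: power2_eq_square)
  finally have "(k+1)^2 = 4 * (m * m)" .
  then show ?thesis using m by simp
next
  case False
  then obtain m where m: "k + 1 = 2 * m + 1" by (metis oddE)
  have "(k+1)^2 = (2*m+1)^2" using m by simp
  also have "\<dots> = 4 * (m * m + m) + 1" by (simp add: power2_eq_square algebra_simps)
  finally have "(k+1)^2 = 4 * (m * m + m) + 1" .
  moreover have "(k+1) div 2 = m" using m by simp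
  ultimately show ?thesis using m by simp
qed

lemma card_same_res:
  fixes L m :: nat
  assumes "L > 0"
  shows "card {j. j < m \<and> j mod L = m mod L} = m div L"
proof -
  have eq: "{j. j < m \<and> j mod L = m mod L} = (\<lambda>i. m mod L + i * L) ` {..<m div L}"
  proof (intro equalityI subsetI)
    fix j assume "j \<in> {j. j < m \<and> j mod L = m mod L}"
    then have j: "j < m" "j mod L = m mod L" by auto
    have dj: "j = m mod L + (j div L) * L" using j(2) by (metis div_mult_mod_eq add.commute)
    have dm: "m = m mod L + (m div L) * L" by (metis div_mult_mod_eq add.commute)
    have "j div L < m div L"
    proof (rule ccontr)
      assume "\<not> j div L < m div L"
      then have "(m div L) * L \<le> (j div L) * L" by (intro mult_le_mono1) simp
      then show False using j(1) dj dm by linarith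
    qed
    then show "j \<in> (\<lambda>i. m mod L + i * L) ` {..<m div L}" using dj by blast
  next
    fix x assume "x \<in> (\<lambda>i. m mod L + i * L) ` {..<m div L}"
    then obtain i where i: "i < m div L" "x = m mod L + i * L" by blast
    have dm: "m = m mod L + (m div L) * L" by (metis div_mult_mod_eq add.commute)
    have "Suc i * L \<le> (m div L) * L" using i(1) by (intro mult_le_mono1) simp
    then have "x < m" using i(2) dm assms by (simp only: mult_Suc; linarith)
    moreover have "x mod L = m mod L" using i(2) by simp
    ultimately show "x \<in> {j. j < m \<and> j mod L = m mod L}" by simp
  qed
  have "inj_on (\<lambda>i. m mod L + i * L) {..<m div L}"
    using assms by (auto simp: inj_on_def)
  then show ?thesis unfolding eq by (simp add: card_image)
qed

lemma sum_div_formula: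
  fixes L n :: nat
  assumes "L > 0"
  shows "(\<Sum>j<n. j div L) = (n mod L) * (((n - n mod L) div L + 1) choose 2)
             + (L - n mod L) * (((n - n mod L) div L) choose 2)"
proof (induction n)
  case 0
  then show ?case by simp
next
  case (Suc n)
  define m where "m = n div L"
  define q where "q = n mod L"
  have nq: "n = m * L + q" unfolding m_def q_def by simp
  have qL: "q < L" unfolding q_def using assms by simp
  have e1: "(n - n mod L) div L = m" unfolding m_def
    by (simp add: minus_mod_eq_mult_div)
  have ch: "(m + 1) choose 2 = (m choose 2) + m"
    by (simp add: numeral_2_eq_2)
  show ?case
  proof (cases "q + 1 < L")
    case True
    have sq: "Suc n mod L = q + 1" using nq True by (simp add: mod_Suc q_def)
    have sm: "(Suc n - Suc n mod L) div L = m" using sq nq assms by simp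
    have "(\<Sum>j<Suc n. j div L) = (\<Sum>j<n. j div L) + m" by (simp add: m_def)
    also have "\<dots> = q * ((m + 1) choose 2) + (L - q) * (m choose 2) + m"
      using Suc.IH e1 by (simp add: q_def)
    also have "\<dots> = (q+1) * ((m + 1) choose 2) + (L - (q+1)) * (m choose 2)"
    proof -
      have "L - q = Suc (L - (q+1))" using True by simp
      then show ?thesis using ch by (simp add: algebra_simps)
    qed
    finally show ?thesis using sq sm by simp
  next
    case False
    then have qq: "q + 1 = L" using qL by simp
    have "Suc n = (m+1) * L" using nq qq by simp
    then have sq: "Suc n mod L = 0" and sm: "(Suc n - Suc n mod L) div L = m + 1"
      using assms by simp_all
    have "(\<Sum>j<Suc n. j div L) = (\<Sum>j<n. j div L) + m" by (simp add: m_def)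
    also have "\<dots> = q * ((m + 1) choose 2) + (L - q) * (m choose 2) + m"
      using Suc.IH e1 by (simp add: q_def)
    also have "\<dots> = L * ((m + 1) choose 2)"
    proof -
      have "L - q = 1" using qq by simp
      then show ?thesis using ch by (simp add: qq[symmetric] algebra_simps)
    qed
    finally show ?thesis using sq sm by simp
  qed
qed

lemma crosses_disj:
  assumes "crosses pos {Inl a, Inr j} {Inl b, Inr j'}"
  shows "(pos (Inl a) < pos (Inl b) \<and> pos (Inl b) < pos (Inr j) \<and> pos (Inr j) < pos (Inr j')) \<or>
         (pos (Inl a) < pos (Inr j') \<and> pos (Inr j') < pos (Inr j) \<and> pos (Inr j) < pos (Inl b)) \<or>
         (pos (Inr j) < pos (Inl b) \<and> pos (Inl b) < pos (Inl a) \<and> pos (Inl a) < pos (Inr j')) \<or>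
         (pos (Inr j) < pos (Inr j') \<and> pos (Inr j') < pos (Inl a) \<and> pos (Inl a) < pos (Inl b))"
  using assms unfolding crosses_def doubleton_eq_iff by auto

definition sK :: "nat \<Rightarrow> nat" where "sK k = (k+1) div 2"
definition LL :: "nat \<Rightarrow> nat" where "LL k = sK k * (k + 1 - sK k)"
definition dd :: "nat \<Rightarrow> nat \<Rightarrow> nat" where "dd k j = (j mod LL k) mod sK k"
definition gg :: "nat \<Rightarrow> nat \<Rightarrow> nat" where "gg k j = sK k + 1 + (j mod LL k) div sK k"
definition WW :: "nat \<Rightarrow> nat \<Rightarrow> nat" where "WW k n = sK k * n + 1"
definition posf :: "nat \<Rightarrow> nat \<Rightarrow> nat + nat \<Rightarrow> nat" where
  "posf k n = case_sum (\<lambda>a. a * WW k n) (\<lambda>j. (gg k j - 1) * WW k n + (1 + (dd k j * n + j)))"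
definition aof :: "(nat + nat) set \<Rightarrow> nat" where "aof e = (THE a. Inl a \<in> e)"
definition jof :: "(nat + nat) set \<Rightarrow> nat" where "jof e = (THE j. Inr j \<in> e)"
definition pagef :: "nat \<Rightarrow> (nat + nat) set \<Rightarrow> nat" where
  "pagef k e = pg k (dd k (jof e)) (gg k (jof e)) (aof e)"

lemma aof_simp[simp]: "aof {Inl a, Inr j} = a"
  unfolding aof_def by (rule the_equality) auto
lemma jof_simp[simp]: "jof {Inl a, Inr j} = j"
  unfolding jof_def by (rule the_equality) auto

lemma sK_pos: "k \<ge> 1 \<Longrightarrow> sK k \<ge> 1" unfolding sK_def by simp
lemma sK_le: "sK k \<le> k + 1 - sK k" unfolding sK_def by simp
lemma LL_pos: "k \<ge> 1 \<Longrightarrow> LL k \<ge> 1"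
  unfolding LL_def using sK_pos[of k] sK_le[of k] by simp
lemma dd_lt: "k \<ge> 1 \<Longrightarrow> dd k j < sK k"
  unfolding dd_def using sK_pos[of k] by simp
lemma gg_ge: "sK k + 1 \<le> gg k j" unfolding gg_def by simp
lemma gg_le: assumes "k \<ge> 1" shows "gg k j \<le> k + 1"
proof -
  have "j mod LL k < LL k" using LL_pos[OF assms] by simp
  then have "j mod LL k < (k + 1 - sK k) * sK k" unfolding LL_def by (simp add: mult.commute)
  then have "(j mod LL k) div sK k < k + 1 - sK k" by (rule less_mult_imp_div_less)
  then show ?thesis unfolding gg_def using sK_le[of k] by linarith
qed

lemma rB_lt:
  assumes "k \<ge> 1" "j < n"
  shows "1 + (dd k j * n + j) < WW k n"
proof -
  have "Suc (dd k j) * n \<le> sK k * n" using dd_lt[OF assms(1), of j] by (intro mult_le_mono1) (simp add: Suc_le_eq)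
  then show ?thesis unfolding WW_def using assms(2) by simp
qed

lemma WW_pos: "WW k n > 0" unfolding WW_def by simp

lemma PLL: "posf k n (Inl a) < posf k n (Inl b) \<longleftrightarrow> a < b"
  unfolding posf_def using WW_pos[of k n] by simp

lemma PLR:
  assumes "k \<ge> 1" "j < n"
  shows "posf k n (Inl a) < posf k n (Inr j) \<longleftrightarrow> a < gg k j"
proof -
  have "a * WW k n + 0 < (gg k j - 1) * WW k n + (1 + (dd k j * n + j)) \<longleftrightarrow>
        a < gg k j - 1 \<or> (a = gg k j - 1 \<and> 0 < 1 + (dd k j * n + j))"
    by (rule lex_lt) (use rB_lt[OF assms] in auto)
  then show ?thesis unfolding posf_def using gg_ge[of k j] by auto
qed

lemma PRL:
  assumes "k \<ge> 1" "j < n"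
  shows "posf k n (Inr j) < posf k n (Inl a) \<longleftrightarrow> gg k j \<le> a"
proof -
  have "(gg k j - 1) * WW k n + (1 + (dd k j * n + j)) < a * WW k n + 0 \<longleftrightarrow>
        gg k j - 1 < a \<or> (gg k j - 1 = a \<and> 1 + (dd k j * n + j) < 0)"
    by (rule lex_lt) (use rB_lt[OF assms] in auto)
  then show ?thesis unfolding posf_def using gg_ge[of k j] by auto
qed

lemma PRR:
  assumes "k \<ge> 1" "j < n" "j' < n"
  shows "posf k n (Inr j) < posf k n (Inr j') \<longleftrightarrow>
     gg k j < gg k j' \<or> (gg k j = gg k j' \<and> (dd k j < dd k j' \<or> (dd k j = dd k j' \<and> j < j')))"
proof -
  have "(gg k j - 1) * WW k n + (1 + (dd k j * n + j)) < (gg k j' - 1) * WW k n + (1 + (dd k j' * n + j')) \<longleftrightarrow>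
        gg k j - 1 < gg k j' - 1 \<or> (gg k j - 1 = gg k j' - 1 \<and> 1 + (dd k j * n + j) < 1 + (dd k j' * n + j'))"
    by (rule lex_lt) (use rB_lt[OF assms(1,2)] rB_lt[OF assms(1,3)] in auto)
  moreover have "dd k j * n + j < dd k j' * n + j' \<longleftrightarrow> dd k j < dd k j' \<or> (dd k j = dd k j' \<and> j < j')"
    by (rule lex_lt) (use assms in auto)
  ultimately show ?thesis unfolding posf_def using gg_ge[of k j] gg_ge[of k j'] by auto
qed

lemma posf_inj:
  assumes "k \<ge> 1" "n \<ge> 1"
  shows "inj_on (posf k n) (Kbip_V (k + 1) n)"
proof (rule inj_onI)
  fix x y assume xV: "x \<in> Kbip_V (k + 1) n" and yV: "y \<in> Kbip_V (k + 1) n"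
    and eq: "posf k n x = posf k n y"
  show "x = y"
  proof (rule ccontr)
    assume ne: "x \<noteq> y"
    have "posf k n x < posf k n y \<or> posf k n y < posf k n x"
    proof -
      consider (LL) a b where "x = Inl a" "y = Inl b"
        | (LR) a j where "x = Inl a" "y = Inr j" "j < n"
        | (RL) a j where "x = Inr j" "y = Inl a" "j < n"
        | (RR) j j' where "x = Inr j" "y = Inr j'" "j < n" "j' < n"
        using xV yV unfolding Kbip_V_def by auto
      then show ?thesis
      proof cases
        case LL then show ?thesis using PLL ne by (metis nat_neq_iff)
      next
        case LR then show ?thesis using PLR[OF assms(1), of j n a] PRL[OF assms(1), of j n a] by auto
      next
        case RL then show ?thesis using PLR[OF assms(1), of j n a] PRL[OF assms(1), of j n a] by auto
      next
        case RR then show ?thesis using PRR[OF assms(1) RR(3,4)] PRR[OF assms(1) RR(4,3)]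
          using ne by (metis nat_neq_iff)
      qed
    qed
    then show False using eq by simp
  qed
qed

lemma pg_lt:
  assumes "k \<ge> 1" "a \<le> k" "g \<le> k + 1" "d < k"
  shows "pg k d g a < k"
  using assms unfolding pg_def hh_def by auto

lemma cross_char:
  assumes k: "k \<ge> 1" and "a \<le> k" "b \<le> k" "j < n" "j' < n"
    and pe: "pagef k {Inl a, Inr j} = pagef k {Inl b, Inr j'}"
    and cr: "crosses (posf k n) {Inl a, Inr j} {Inl b, Inr j'}"
  shows "j < j' \<and> j mod LL k = j' mod LL k \<and> a = dd k j \<and> b = dd k j + 1"
proof -
  note dj = dd_lt[OF k, of j] and dj' = dd_lt[OF k, of j']
  note g1 = gg_ge[of k j] and g2 = gg_le[OF k, of j] and g3 = gg_ge[of k j'] and g4 = gg_le[OF k, of j']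
  have p: "pg k (dd k j) (gg k j) a = pg k (dd k j') (gg k j') b"
    using pe unfolding pagef_def by simp
  have page: "hh (dd k j) a + gg k j = hh (dd k j') b + gg k j' \<or>
     hh (dd k j) a + gg k j + k = hh (dd k j') b + gg k j' \<or>
     hh (dd k j) a + gg k j = hh (dd k j') b + gg k j' + k"
    by (rule pg_eq) (use p g1 g3 in auto)
  note hx = hh_cases[of a "dd k j"] and hy = hh_cases[of b "dd k j'"]
  have c4: "(a < b \<and> b < gg k j \<and> (gg k j < gg k j' \<or> gg k j = gg k j' \<and> (dd k j < dd k j' \<or> dd k j = dd k j' \<and> j < j'))) \<or>
     (a < gg k j' \<and> (gg k j' < gg k j \<or> gg k j' = gg k j \<and> (dd k j' < dd k j \<or> dd k j' = dd k j \<and> j' < j)) \<and> gg k j \<le> b) \<or>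
     (gg k j \<le> b \<and> b < a \<and> a < gg k j') \<or>
     ((gg k j < gg k j' \<or> gg k j = gg k j' \<and> (dd k j < dd k j' \<or> dd k j = dd k j' \<and> j < j')) \<and> gg k j' \<le> a \<and> a < b)"
    using crosses_disj[OF cr] unfolding PLL PLR[OF k assms(4)] PLR[OF k assms(5)] PRL[OF k assms(4)] PRL[OF k assms(5)]
      PRR[OF k assms(4,5)] PRR[OF k assms(5,4)] .
  have res: "gg k j = gg k j' \<and> dd k j = dd k j' \<and> j < j' \<and> a = dd k j \<and> b = dd k j + 1"
    using c4 core1[OF dj dj' g1 g2 g3 g4 assms(2,3) hx hy page] core2[OF dj dj' g1 g2 g3 g4 assms(2,3) hx hy page]
      core3[OF dj dj' g1 g2 g3 g4 assms(2,3) hx hy page] core4[OF dj dj' g1 g2 g3 g4 assms(2,3) hx hy page]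
    by blast
  have "j mod LL k = j' mod LL k"
  proof -
    have "(j mod LL k) div sK k = (j' mod LL k) div sK k" using res unfolding gg_def by simp
    moreover have "(j mod LL k) mod sK k = (j' mod LL k) mod sK k" using res unfolding dd_def by simp
    ultimately show ?thesis by (metis div_mult_mod_eq)
  qed
  then show ?thesis using res by simp
qed

theorem lemma20:
  fixes k n :: nat
  assumes "k \<ge> 1" and "n \<ge> 1"
  defines "l \<equiv> (k + 1)^2 div 4"
  defines "q \<equiv> n mod l"
  shows "book_crossing_number k (Kbip_V (k + 1) n) (Kbip_E (k + 1) n)
           \<le> q * (((n - q) div l + 1) choose 2) + (l - q) * (((n - q) div l) choose 2)"
proof -
  define L where "L = LL k"
  have Ll: "l = L" unfolding l_def L_def LL_def sK_def using L_eq[of k] by simp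
  have Lpos: "L > 0" using LL_pos[OF assms(1)] unfolding L_def by simp
  have sKk: "sK k \<le> k" unfolding sK_def using assms(1) by simp
  have bd: "book_drawing k (Kbip_V (k + 1) n) (Kbip_E (k + 1) n) (posf k n) (pagef k)"
    unfolding book_drawing_def
  proof
    show "inj_on (posf k n) (Kbip_V (k + 1) n)" by (rule posf_inj[OF assms(1,2)])
    show "\<forall>e\<in>Kbip_E (k + 1) n. pagef k e < k"
    proof
      fix e assume "e \<in> Kbip_E (k + 1) n"
      then obtain a j where e: "e = {Inl a, Inr j}" "a < k + 1" "j < n" unfolding Kbip_E_def by auto
      have "dd k j < k" using dd_lt[OF assms(1), of j] sKk by simp
      then show "pagef k e < k" unfolding e pagef_def
        using pg_lt[OF assms(1) _ gg_le[OF assms(1)]] e(2) by simp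
    qed
  qed
  define Cr where "Cr = {(e, f). e \<in> Kbip_E (k + 1) n \<and> f \<in> Kbip_E (k + 1) n \<and>
      pagef k e = pagef k f \<and> crosses (posf k n) e f}"
  define P where "P = (SIGMA j':{..<n}. {j. j < j' \<and> j mod L = j' mod L})"
  have sub: "Cr \<subseteq> (\<lambda>(j', j). ({Inl (dd k j), Inr j}, {Inl (dd k j + 1), Inr j'})) ` P"
  proof
    fix x assume "x \<in> Cr"
    then obtain e f where x: "x = (e, f)" "e \<in> Kbip_E (k + 1) n" "f \<in> Kbip_E (k + 1) n"
      "pagef k e = pagef k f" "crosses (posf k n) e f" unfolding Cr_def by auto
    obtain a j where e: "e = {Inl a, Inr j}" "a < k + 1" "j < n" using x(2) unfolding Kbip_E_def by auto
    obtain b j' where f: "f = {Inl b, Inr j'}" "b < k + 1" "j' < n" using x(3) unfolding Kbip_E_def by auto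
    have c: "j < j' \<and> j mod LL k = j' mod LL k \<and> a = dd k j \<and> b = dd k j + 1"
      using cross_char[OF assms(1), of a b j n j'] e f x(4,5) by simp
    then have "(j', j) \<in> P" unfolding P_def L_def using f(3) by simp
    then show "x \<in> (\<lambda>(j', j). ({Inl (dd k j), Inr j}, {Inl (dd k j + 1), Inr j'})) ` P"
      using x(1) e(1) f(1) c by force
  qed
  have finP: "finite P" unfolding P_def by (rule finite_SigmaI) auto
  have "card Cr \<le> card ((\<lambda>(j', j). ({Inl (dd k j), Inr j}, {Inl (dd k j + 1), Inr j'})) ` P)"
    by (rule card_mono[OF finite_imageI[OF finP] sub])
  also have "\<dots> \<le> card P" by (rule card_image_le[OF finP])
  also have "card P = (\<Sum>j'<n. card {j. j < j' \<and> j mod L = j' mod L})"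
    unfolding P_def by (rule card_SigmaI) auto
  also have "\<dots> = (\<Sum>j'<n. j' div L)" using card_same_res[OF Lpos] by simp
  also have "\<dots> = q * (((n - q) div l + 1) choose 2) + (l - q) * (((n - q) div l) choose 2)"
    unfolding q_def Ll by (rule sum_div_formula[OF Lpos])
  finally have cr: "crossings (Kbip_E (k + 1) n) (posf k n) (pagef k) \<le>
      q * (((n - q) div l + 1) choose 2) + (l - q) * (((n - q) div l) choose 2)"
    unfolding crossings_def Cr_def .
  have "book_crossing_number k (Kbip_V (k + 1) n) (Kbip_E (k + 1) n)
        \<le> crossings (Kbip_E (k + 1) n) (posf k n) (pagef k)"
    unfolding book_crossing_number_def
    by (rule cInf_lower) (use bd in auto)
  then show ?thesis using cr by linarith
qed

end
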